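(* Let $(C,D)$ define an irreducible MSPP of order $p$ (a MAP with $C$ diagonal). Then $T_1^{\pi}\ge_{\mathrm{st}} T_1^{\alpha}$, i.e. $$\boldsymbol{\pi}e^{Ct}\mathbf{1}\ \ge\ \boldsymbol{\alpha}e^{Ct}\mathbf{1}\qquad\text{for all } t\ge 0.$$
   Context: A Markovian arrival process (MAP) of order $p$ is specified by $p\times p$ real matrices $C$ and $D$ such that $D$ has nonnegative entries, $C$ has nonnegative off-diagonal entries, and $Q=C+D$ is the generator (row sums zero) of an irreducible continuous-time Markov chain on $\{1,\dots,p\}$; $C$ is assumed nonsingular. An MSPP is a MAP with $C$ diagonal. $\mathbf{1}$ is the all-ones column vector. $\boldsymbol{\pi}$ is the stationary distribution of $Q$ ($\boldsymbol{\pi}Q=\mathbf{0}$, $\boldsymbol{\pi}\mathbf{1}=1$), and $\boldsymbol{\alpha}$ is the stationary distribution of $P=(-C)^{-1}D$ ($\boldsymbol{\alpha}P=\boldsymbol{\alpha}$, $\boldsymbol{\alpha}\mathbf{1}=1$). $T_1^{\boldsymbol{\eta}}$ denotes the time of the first event when the initial phase has distribution $\boldsymbol{\eta}$; $\mathbb{P}(T_1^{\boldsymbol{\eta}}>t)=\boldsymbol{\eta}e^{Ct}\mathbf{1}$. $X\ge_{\mathrm{st}}Y$ means $\mathbb{P}(X>t)\ge\mathbb{P}(Y>t)$ for all $t$. *)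

theory Defs
  imports "HOL-Analysis.Analysis"
begin

primrec mpow :: "real^'n^'n \<Rightarrow> nat \<Rightarrow> real^'n^'n" where
  "mpow A 0 = mat 1"
| "mpow A (Suc k) = A ** mpow A k"

definition mexp :: "real^'n^'n \<Rightarrow> real^'n^'n" where
  "mexp A = (\<chi> i j. (\<Sum>k. (mpow A k) $ i $ j / fact k))"

definition is_generator :: "real^'n^'n \<Rightarrow> bool" where
  "is_generator Q \<longleftrightarrow> (\<forall>i j. i \<noteq> j \<longrightarrow> Q $ i $ j \<ge> 0) \<and> (\<forall>i. (\<Sum>j\<in>UNIV. Q $ i $ j) = 0)"

definition irreducible_gen :: "real^'n^'n \<Rightarrow> bool" where
  "irreducible_gen Q \<longleftrightarrow> (\<forall>i j. (i, j) \<in> {(k, l). k \<noteq> l \<and> Q $ k $ l > 0}\<^sup>*)"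

definition is_MAP :: "real^'n^'n \<Rightarrow> real^'n^'n \<Rightarrow> bool" where
  "is_MAP C D \<longleftrightarrow> (\<forall>i j. D $ i $ j \<ge> 0) \<and> (\<forall>i j. i \<noteq> j \<longrightarrow> C $ i $ j \<ge> 0)
     \<and> is_generator (C + D) \<and> irreducible_gen (C + D) \<and> invertible C"

definition is_MSPP :: "real^'n^'n \<Rightarrow> real^'n^'n \<Rightarrow> bool" where
  "is_MSPP C D \<longleftrightarrow> is_MAP C D \<and> (\<forall>i j. i \<noteq> j \<longrightarrow> C $ i $ j = 0)"

definition is_distribution :: "real^'n \<Rightarrow> bool" where
  "is_distribution v \<longleftrightarrow> (\<forall>i. v $ i \<ge> 0) \<and> (\<Sum>i\<in>UNIV. v $ i) = 1"

end

theory Submission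
  imports Defs
begin

lemma cheb:
  fixes p l f :: "'a \<Rightarrow> real" and S :: "'a set"
  assumes fin: "finite S" and p: "\<And>i. i \<in> S \<Longrightarrow> p i \<ge> 0" and s1: "sum p S = 1"
    and mono: "\<And>i j. i \<in> S \<Longrightarrow> j \<in> S \<Longrightarrow> l i \<le> l j \<Longrightarrow> f j \<le> f i"
  shows "(\<Sum>i\<in>S. p i * l i * f i) \<le> (\<Sum>i\<in>S. p i * l i) * (\<Sum>i\<in>S. p i * f i)"
proof -
  have le: "(\<Sum>i\<in>S. \<Sum>j\<in>S. p i * p j * ((l i - l j) * (f i - f j))) \<le> 0"
  proof (intro sum_nonpos)
    fix i j assume i: "i \<in> S" and j: "j \<in> S"
    have "(l i - l j) * (f i - f j) \<le> 0"
    proof (cases "l i \<le> l j")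
      case True then have "f j \<le> f i" using mono i j by blast
      with True show ?thesis by (simp add: mult_nonpos_nonneg)
    next
      case False then have "f i \<le> f j" using mono i j by force
      with False show ?thesis by (simp add: mult_nonneg_nonpos)
    qed
    moreover have "p i * p j \<ge> 0" using p i j by simp
    ultimately show "p i * p j * ((l i - l j) * (f i - f j)) \<le> 0"
      by (simp add: mult_nonneg_nonpos)
  qed
  have eq: "(\<Sum>i\<in>S. \<Sum>j\<in>S. p i * p j * ((l i - l j) * (f i - f j)))
      = (\<Sum>i\<in>S. \<Sum>j\<in>S. (p j * (p i * l i * f i) + p i * (p j * l j * f j))
            - ((p i * l i) * (p j * f j) + (p j * l j) * (p i * f i)))"
    by (intro sum.cong refl) (simp add: algebra_simps)
  also have "\<dots> = 2 * (\<Sum>i\<in>S. p i * l i * f i) - 2 * ((\<Sum>i\<in>S. p i * l i) * (\<Sum>i\<in>S. p i * f i))"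
    by (simp add: sum_subtractf sum.distrib sum_distrib_left[symmetric] sum_distrib_right[symmetric]
        s1 sum.swap[of "\<lambda>i j. p i * l i * (p j * f j)"])
  finally show ?thesis using le by simp
qed

lemma pos_lemma:
  fixes D :: "real^'n^'n" and x :: "real^'n" and lam :: "'n \<Rightarrow> real"
  assumes D: "\<And>i j. D$i$j \<ge> 0" and x: "\<And>i. x$i \<ge> 0"
    and rel: "\<And>j. (\<Sum>i\<in>UNIV. x$i * D$i$j) = x$j * lam j"
    and lam: "\<And>j. lam j > 0"
    and irr: "\<And>i j. (i,j) \<in> {(k,l). k \<noteq> l \<and> D$k$l > 0}\<^sup>*"
    and nz: "x \<noteq> 0"
  shows "x$i > 0"
proof -
  obtain k where "x$k \<noteq> 0" using nz by (metis vec_eq_iff zero_index)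
  with x have k: "x$k > 0" by (simp add: order_less_le)
  have "(k,i) \<in> {(k,l). k \<noteq> l \<and> D$k$l > 0}\<^sup>*" by (rule irr)
  then show ?thesis
  proof (induction rule: rtrancl_induct)
    case base then show ?case by (rule k)
  next
    case (step y z)
    then have yz: "D$y$z > 0" by simp
    have "x$y * D$y$z \<le> (\<Sum>i\<in>UNIV. x$i * D$i$z)"
      by (rule member_le_sum) (auto simp: x D)
    moreover have "x$y * D$y$z > 0" using step.IH yz by simp
    ultimately have "x$z * lam z > 0" using rel by simp
    with lam show ?case by (simp add: zero_less_mult_iff) (meson lam not_less_iff_gr_or_eq)
  qed
qed

lemma uniq_lemma:
  fixes D :: "real^'n^'n" and x y :: "real^'n" and lam :: "'n \<Rightarrow> real"
  assumes D: "\<And>i j. D$i$j \<ge> 0" and x: "\<And>i. x$i \<ge> 0" and y: "\<And>i. y$i \<ge> 0"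
    and relx: "\<And>j. (\<Sum>i\<in>UNIV. x$i * D$i$j) = x$j * lam j"
    and rely: "\<And>j. (\<Sum>i\<in>UNIV. y$i * D$i$j) = y$j * lam j"
    and lam: "\<And>j. lam j > 0"
    and irr: "\<And>i j. (i,j) \<in> {(k,l). k \<noteq> l \<and> D$k$l > 0}\<^sup>*"
    and nzx: "x \<noteq> 0" and nzy: "y \<noteq> 0"
  shows "\<exists>c. \<forall>i. x$i = c * y$i"
proof -
  have xp: "\<And>i. x$i > 0" using pos_lemma[OF D x relx lam irr nzx] .
  have yp: "\<And>i. y$i > 0" using pos_lemma[OF D y rely lam irr nzy] .
  define c where "c = Min ((\<lambda>i. x$i / y$i) ` UNIV)"
  have "c \<in> (\<lambda>i. x$i / y$i) ` UNIV" unfolding c_def by (rule Min_in) auto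
  then obtain k where ck: "c = x$k / y$k" by auto
  have cle: "c \<le> x$i / y$i" for i unfolding c_def by (rule Min_le) auto
  define z where "z = (\<chi> i. x$i - c * y$i)"
  have z: "z$i \<ge> 0" for i
    using cle[of i] yp[of i] by (simp add: z_def pos_le_divide_eq mult.commute)
  have relz: "(\<Sum>i\<in>UNIV. z$i * D$i$j) = z$j * lam j" for j
  proof -
    have "(\<Sum>i\<in>UNIV. z$i * D$i$j) = (\<Sum>i\<in>UNIV. x$i * D$i$j) - c * (\<Sum>i\<in>UNIV. y$i * D$i$j)"
      by (simp add: z_def algebra_simps sum_subtractf sum_distrib_left)
    also have "\<dots> = z$j * lam j" by (simp add: relx rely z_def algebra_simps)
    finally show ?thesis .
  qed
  have "z$k = 0" using ck yp[of k] by (simp add: z_def)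
  then have "z = 0" using pos_lemma[OF D z relz lam irr] by (metis less_irrefl)
  then have "\<forall>i. x$i = c * y$i" by (simp add: z_def vec_eq_iff)
  then show ?thesis by blast
qed

lemma mpow_diag:
  fixes C :: "real^'n^'n"
  assumes "\<And>i j. i \<noteq> j \<Longrightarrow> C$i$j = 0"
  shows "mpow C k = (\<chi> i j. if i = j then (C$i$i)^k else 0)"
proof (induction k)
  case 0 then show ?case by (simp add: mat_def vec_eq_iff)
next
  case (Suc k)
  have "(C ** mpow C k)$i$j = (if i = j then (C$i$i)^Suc k else 0)" for i j
  proof -
    have "(C ** mpow C k)$i$j = (\<Sum>l\<in>UNIV. C$i$l * (if l = j then (C$l$l)^k else 0))"
      by (simp add: matrix_matrix_mult_def Suc)
    also have "\<dots> = (\<Sum>l\<in>UNIV. if l = j then C$i$j * (C$j$j)^k else 0)"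
      by (intro sum.cong) auto
    also have "\<dots> = C$i$j * (C$j$j)^k" by simp
    finally show ?thesis using assms[of i j] by auto
  qed
  then show ?case by (simp add: vec_eq_iff)
qed

lemma mexp_diag:
  fixes C :: "real^'n^'n"
  assumes "\<And>i j. i \<noteq> j \<Longrightarrow> C$i$j = 0"
  shows "mexp C *v vec 1 = (\<chi> i. exp (C$i$i))"
proof -
  have e: "mexp C $ i $ j = (if i = j then exp (C$i$i) else 0)" for i j
  proof -
    have "mexp C $ i $ j = (\<Sum>k. (if i = j then (C$i$i)^k else 0) / fact k)"
      by (simp add: mexp_def mpow_diag[OF assms])
    also have "\<dots> = (if i = j then exp (C$i$i) else 0)"
    proof (cases "i = j")
      case True
      have "(\<lambda>k. (C$i$i)^k / fact k) sums exp (C$i$i)"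
        using exp_converges[of "C$i$i"] by (simp add: divide_inverse mult.commute)
      then show ?thesis using True by (simp add: sums_iff)
    qed simp
    finally show ?thesis .
  qed
  show ?thesis
    by (simp add: vec_eq_iff matrix_vector_mult_def e)
qed

theorem proposition3:
  fixes C D :: "real^'n^'n" and \<pi> \<alpha> :: "real^'n"
  assumes "is_MSPP C D"
    and "is_distribution \<pi>" and "\<pi> v* (C + D) = 0"
    and "is_distribution \<alpha>" and "\<alpha> v* (matrix_inv (- C) ** D) = \<alpha>"
  shows "\<forall>t::real. t \<ge> 0 \<longrightarrow>
           \<alpha> \<bullet> (mexp (t *\<^sub>R C) *v vec 1) \<le> \<pi> \<bullet> (mexp (t *\<^sub>R C) *v vec 1)"
proof -
  have Cd: "\<And>i j. i \<noteq> j \<Longrightarrow> C$i$j = 0" using assms(1) unfolding is_MSPP_def by blast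
  have mp: "is_MAP C D" using assms(1) unfolding is_MSPP_def by blast
  have D: "\<And>i j. D$i$j \<ge> 0" using mp unfolding is_MAP_def by blast
  have gen: "\<And>i. (\<Sum>j\<in>UNIV. (C+D)$i$j) = 0" using mp unfolding is_MAP_def is_generator_def by blast
  have invC: "invertible C" using mp unfolding is_MAP_def by blast
  have irrCD: "irreducible_gen (C + D)" using mp unfolding is_MAP_def by blast
  have pnn: "\<And>i. \<pi>$i \<ge> 0" and sp: "(\<Sum>i\<in>UNIV. \<pi>$i) = 1"
    using assms(2) unfolding is_distribution_def by blast+
  have ann: "\<And>i. \<alpha>$i \<ge> 0" and sa: "(\<Sum>i\<in>UNIV. \<alpha>$i) = 1"
    using assms(4) unfolding is_distribution_def by blast+
  define lam where "lam i = - C$i$i" for i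
  have rowC: "(\<Sum>j\<in>UNIV. C$i$j) = C$i$i" for i
  proof -
    have "(\<Sum>j\<in>UNIV. C$i$j) = (\<Sum>j\<in>UNIV. if j = i then C$i$i else 0)"
      by (intro sum.cong) (auto simp: Cd)
    then show ?thesis by simp
  qed
  have row: "C$i$i + (\<Sum>j\<in>UNIV. D$i$j) = 0" for i
    using gen[of i] rowC[of i] by (simp add: sum.distrib)
  have lamge: "lam i \<ge> 0" for i
    using row[of i] sum_nonneg[of UNIV "\<lambda>j. D$i$j"] D by (simp add: lam_def)
  have Cnz: "C$i$i \<noteq> 0" for i
  proof
    assume z: "C$i$i = 0"
    obtain B where B: "C ** B = mat 1" using invC invertible_def by blast
    have "(C ** B)$i$i = (\<Sum>k\<in>UNIV. C$i$k * B$k$i)" by (simp add: matrix_matrix_mult_def)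
    also have "\<dots> = 0" using z Cd by (intro sum.neutral) (metis mult_eq_0_iff)
    finally show False using B by (simp add: mat_def)
  qed
  have lam: "lam i > 0" for i using lamge[of i] Cnz[of i] by (simp add: lam_def)
  have irr: "\<And>i j. (i,j) \<in> {(k,l). k \<noteq> l \<and> D$k$l > 0}\<^sup>*"
  proof -
    have "{(k,l). k \<noteq> l \<and> (C+D)$k$l > 0} = {(k,l). k \<noteq> l \<and> D$k$l > 0}"
      using Cd by auto
    then show "\<And>i j. (i,j) \<in> {(k,l). k \<noteq> l \<and> D$k$l > 0}\<^sup>*"
      using irrCD unfolding irreducible_gen_def by simp
  qed
  define N :: "real^'n^'n" where "N = (\<chi> i j. if i = j then 1 / lam i else 0)"
  have NC: "N ** (- C) = mat 1"
  proof -
    have "(N ** (- C))$i$j = (if i = j then 1 else 0)" for i j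
    proof -
      have "(N ** (- C))$i$j = (\<Sum>l\<in>UNIV. N$i$l * (- C$l$j))"
        by (simp add: matrix_matrix_mult_def)
      also have "\<dots> = (\<Sum>l\<in>UNIV. if l = i then (1 / lam i) * (- C$i$j) else 0)"
        by (intro sum.cong) (auto simp: N_def)
      finally have "(N ** (- C))$i$j = (1 / lam i) * (- C$i$j)" by simp
      then show ?thesis using lam[of i] Cd[of i j] by (auto simp: lam_def)
    qed
    then show ?thesis by (simp add: vec_eq_iff mat_def)
  qed
  have CN: "(- C) ** N = mat 1" using NC matrix_left_right_inverse by blast
  define M where "M = matrix_inv (- C)"
  have MC: "M ** (- C) = mat 1"
  proof -
    have "\<exists>A'. (- C) ** A' = mat 1 \<and> A' ** (- C) = mat 1" using NC CN by blast
    from someI_ex[OF this] show ?thesis unfolding M_def matrix_inv_def by blast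
  qed
  define \<beta> where "\<beta> = \<alpha> v* M"
  have bD: "\<beta> v* D = \<alpha>" using assms(5) by (simp add: \<beta>_def M_def vector_matrix_mul_assoc)
  have bC: "\<beta> v* (- C) = \<alpha>" by (simp add: \<beta>_def vector_matrix_mul_assoc MC)
  have vC: "(v v* (- C))$j = v$j * lam j" for v :: "real^'n" and j
  proof -
    have "(v v* (- C))$j = (\<Sum>i\<in>UNIV. v$i * (- C$i$j))"
      by (simp add: vector_matrix_mult_def)
    also have "\<dots> = (\<Sum>i\<in>UNIV. if i = j then v$j * lam j else 0)"
      by (intro sum.cong) (auto simp: Cd lam_def)
    finally have "(v v* (- C))$j = (\<Sum>i\<in>UNIV. if i = j then v$j * lam j else 0)" .
    then show ?thesis by simp
  qed
  have ab: "\<alpha>$j = \<beta>$j * lam j" for j using vC[of \<beta> j] bC by simp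
  have relb: "(\<Sum>i\<in>UNIV. \<beta>$i * D$i$j) = \<beta>$j * lam j" for j
    using bD ab[of j] by (simp add: vector_matrix_mult_def vec_eq_iff)
  have bnn: "\<beta>$i \<ge> 0" for i
  proof -
    have "\<beta>$i = \<alpha>$i / lam i" using ab[of i] lam[of i] by simp
    then show ?thesis using ann[of i] lam[of i] by simp
  qed
  have anz: "\<alpha> \<noteq> 0" using sa by auto
  have bnz: "\<beta> \<noteq> 0" using bC anz by auto
  have piC: "(\<Sum>i\<in>UNIV. \<pi>$i * D$i$j) = \<pi>$j * lam j" for j
  proof -
    have "(\<pi> v* (C + D))$j = 0" using assms(3) by simp
    then have "(\<Sum>i\<in>UNIV. \<pi>$i * C$i$j) + (\<Sum>i\<in>UNIV. \<pi>$i * D$i$j) = 0"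
      by (simp add: vector_matrix_mult_def sum.distrib algebra_simps)
    moreover have "(\<Sum>i\<in>UNIV. \<pi>$i * C$i$j) = - (\<pi> v* (- C))$j"
      by (simp add: vector_matrix_mult_def sum_negf)
    ultimately show ?thesis using vC[of \<pi> j] by simp
  qed
  have pnz: "\<pi> \<noteq> 0" using sp by auto
  obtain c where c: "\<And>i. \<beta>$i = c * \<pi>$i"
    using uniq_lemma[OF D bnn pnn relb piC lam irr bnz pnz] by blast
  have ac: "\<alpha>$i = c * (\<pi>$i * lam i)" for i using ab c by simp
  have s1: "c * (\<Sum>i\<in>UNIV. \<pi>$i * lam i) = 1"
    using sa ac by (simp add: sum_distrib_left mult.assoc)
  show ?thesis
  proof (intro allI impI)
    fix t :: real assume t: "t \<ge> 0"
    have ev: "mexp (t *\<^sub>R C) *v vec 1 = (\<chi> i. exp (- t * lam i))"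
      using mexp_diag[of "t *\<^sub>R C"] Cd by (simp add: lam_def)
    have ev1: "mexp (t *\<^sub>R C) *v 1 = (\<chi> i. exp (- t * lam i))"
      using ev by simp
    have ch: "(\<Sum>i\<in>UNIV. \<pi>$i * lam i * exp (- t * lam i))
        \<le> (\<Sum>i\<in>UNIV. \<pi>$i * lam i) * (\<Sum>i\<in>UNIV. \<pi>$i * exp (- t * lam i))"
      by (rule cheb) (auto simp: pnn sp t mult_left_mono)
    have cpos: "c \<ge> 0"
    proof -
      have "(\<Sum>i\<in>UNIV. \<pi>$i * lam i) \<ge> 0" using pnn lamge by (simp add: sum_nonneg)
      then show ?thesis using s1 by (smt (verit) mult_nonpos_nonneg)
    qed
    have "\<alpha> \<bullet> (mexp (t *\<^sub>R C) *v vec 1) = c * (\<Sum>i\<in>UNIV. \<pi>$i * lam i * exp (- t * lam i))"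
      by (simp add: ev ev1 inner_vec_def ac sum_distrib_left algebra_simps)
    also have "\<dots> \<le> c * ((\<Sum>i\<in>UNIV. \<pi>$i * lam i) * (\<Sum>i\<in>UNIV. \<pi>$i * exp (- t * lam i)))"
      using ch cpos by (rule mult_left_mono)
    also have "\<dots> = (\<Sum>i\<in>UNIV. \<pi>$i * exp (- t * lam i))"
      using s1 by (simp add: mult.assoc[symmetric])
    also have "\<dots> = \<pi> \<bullet> (mexp (t *\<^sub>R C) *v vec 1)"
      by (simp add: ev ev1 inner_vec_def)
    finally show "\<alpha> \<bullet> (mexp (t *\<^sub>R C) *v vec 1) \<le> \<pi> \<bullet> (mexp (t *\<^sub>R C) *v vec 1)" .
  qed
qed

end
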